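(* Let $A,B\in\mathbb{C}^{n\times n}$ and let $C=A+B$. Then \[\mathcal{I}(C)\geq \mathcal{I}(A)-\operatorname{rank}(B)\cdot|\Lambda(A)|.\]
   Context: For $M\in\mathbb{C}^{n\times n}$, $\Lambda(M)$ denotes the set of distinct eigenvalues of $M$ and $|\cdot|$ the cardinality of a set. For $\lambda\in\Lambda(M)$, $m_g(M,\lambda)$ denotes the geometric multiplicity of $\lambda$ (dimension of the eigenspace). The derogatory index of $M$ is $\mathcal{I}(M):=\sum_{\lambda\in\Lambda(M)}\big(m_g(M,\lambda)-1\big)$. *)

theory Defs
  imports "HOL-Analysis.Analysis"
begin

definition eigenvalues :: "complex^'n^'n \<Rightarrow> complex set" where
  "eigenvalues M = {c. \<exists>v. v \<noteq> 0 \<and> M *v v = c *s v}"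

definition geom_mult :: "complex^'n^'n \<Rightarrow> complex \<Rightarrow> nat" where
  "geom_mult M c = vec.dim {v. M *v v = c *s v}"

definition derog_index :: "complex^'n^'n \<Rightarrow> nat" where
  "derog_index M = (\<Sum>c\<in>eigenvalues M. geom_mult M c - 1)"

end

theory Submission imports Defs begin

lemma eigsp_subspace: "vec.subspace {v. (M::complex^'n^'n) *v v = c *s v}"
  unfolding vec.subspace_def
  by (auto simp: vec.add vec.scale vector_smult_assoc vector_add_ldistrib mult.commute)

lemma hyper_subspace: "vec.subspace {x. ((B::complex^'n^'m) *v x) $ i = 0}"
  unfolding vec.subspace_def
  by (auto simp: vec.add vec.scale)

lemma dim_cut:
  fixes B :: "complex^'n^'m"
  assumes S: "vec.subspace S"
  shows "vec.dim S \<le> vec.dim (S \<inter> {x. (B *v x) $ i = 0}) + 1"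
proof (cases "S \<subseteq> {x. (B *v x) $ i = 0}")
  case True
  then have "S \<inter> {x. (B *v x) $ i = 0} = S" by blast
  then show ?thesis by simp
next
  case False
  then obtain s0 where s0: "s0 \<in> S" "(B *v s0) $ i \<noteq> 0" by blast
  let ?H = "S \<inter> {x. (B *v x) $ i = 0}"
  have "S \<subseteq> vec.span (insert s0 ?H)"
  proof
    fix s assume s: "s \<in> S"
    define a where "a = (B *v s) $ i / (B *v s0) $ i"
    define t where "t = s - a *s s0"
    have tS: "t \<in> S" unfolding t_def using S s s0 by (simp add: vec.subspace_diff vec.subspace_scale)
    have "(B *v t) $ i = (B *v s) $ i - a * (B *v s0) $ i"
      unfolding t_def by (simp add: vec.diff vec.scale)
    also have "\<dots> = 0" using s0(2) unfolding a_def by simp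
    finally have "t \<in> ?H" using tS by blast
    then have "t \<in> vec.span (insert s0 ?H)" by (simp add: vec.span_base)
    moreover have "a *s s0 \<in> vec.span (insert s0 ?H)" by (simp add: vec.span_base vec.span_scale)
    ultimately have "t + a *s s0 \<in> vec.span (insert s0 ?H)" by (rule vec.span_add)
    then show "s \<in> vec.span (insert s0 ?H)" unfolding t_def by simp
  qed
  then have "vec.dim S \<le> vec.dim (insert s0 ?H)" by (rule vec.dim_mono)
  also have "\<dots> \<le> vec.dim ?H + 1" by (simp add: vec.dim_insert)
  finally show ?thesis .
qed

lemma dim_cut_set:
  fixes B :: "complex^'n^'m"
  assumes "finite I" "vec.subspace S"
  shows "vec.dim S \<le> vec.dim (S \<inter> {x. \<forall>i\<in>I. (B *v x) $ i = 0}) + card I"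
  using assms
proof (induction I rule: finite_induct)
  case empty then show ?case by simp
next
  case (insert i I)
  let ?S = "S \<inter> {x. \<forall>i\<in>I. (B *v x) $ i = 0}"
  have sub: "vec.subspace ?S"
    using insert.prems by (auto simp: vec.subspace_def vec.add vec.scale)
  have eq: "S \<inter> {x. \<forall>j\<in>insert i I. (B *v x) $ j = 0} = ?S \<inter> {x. (B *v x) $ i = 0}" by blast
  have "vec.dim S \<le> vec.dim ?S + card I" using insert by simp
  also have "\<dots> \<le> vec.dim (?S \<inter> {x. (B *v x) $ i = 0}) + 1 + card I"
    using dim_cut[OF sub, of B i] by simp
  finally show ?case using eq insert.hyps by simp
qed


lemma mv_row: "((B::complex^'n^'m) *v x) $ i = (\<Sum>j\<in>UNIV. row i B $ j * x $ j)"
  by (simp add: matrix_vector_mult_def row_def)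

lemma ker_rank:
  fixes B :: "complex^'n^'m"
  obtains I where "finite I" "card I \<le> rank B" "{x. \<forall>i\<in>I. (B *v x) $ i = 0} \<subseteq> {x. B *v x = 0}"
proof -
  obtain R where R: "R \<subseteq> rows B" "vec.independent R" "rows B \<subseteq> vec.span R" "card R = vec.dim (rows B)"
    using vec.basis_exists by blast
  have fR: "finite R" using R(2) vec.independent_bound_general by blast
  define f where "f r = (SOME i. row i B = r)" for r
  have f: "row (f r) B = r" if "r \<in> R" for r
  proof -
    from that R(1) obtain i where "row i B = r" by (auto simp: rows_def)
    then show ?thesis unfolding f_def by (rule someI)
  qed
  let ?I = "f ` R"
  have c: "card ?I \<le> rank B" using card_image_le[OF fR, of f] R(4) by (simp add: row_rank_def_gen)
  have k: "{x. \<forall>i\<in>?I. (B *v x) $ i = 0} \<subseteq> {x. B *v x = 0}"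
  proof
    fix x assume x: "x \<in> {x. \<forall>i\<in>?I. (B *v x) $ i = 0}"
    let ?Z = "{y::complex^'n. (\<Sum>j\<in>UNIV. y $ j * x $ j) = 0}"
    have Zs: "vec.subspace ?Z"
      unfolding vec.subspace_def by (auto simp: distrib_right sum.distrib mult.assoc simp flip: sum_distrib_left)
    have "R \<subseteq> ?Z"
    proof
      fix r assume r: "r \<in> R"
      have "(B *v x) $ f r = 0" using x r by auto
      then show "r \<in> ?Z" using f[OF r] by (simp add: mv_row)
    qed
    then have "vec.span R \<subseteq> ?Z" using Zs by (rule vec.span_minimal)
    then have "rows B \<subseteq> ?Z" using R(3) by blast
    then have "\<forall>j. (B *v x) $ j = 0" by (auto simp: mv_row rows_def)
    then show "x \<in> {x. B *v x = 0}" by (simp add: vec_eq_iff)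
  qed
  show ?thesis using that[OF finite_imageI[OF fR] c k] .
qed

lemma eig_indep:
  fixes M :: "complex^'n^'n"
  assumes "finite F" "\<forall>c\<in>F. v c \<noteq> 0 \<and> M *v v c = c *s v c"
  shows "\<forall>k. (\<Sum>c\<in>F. k c *s v c) = 0 \<longrightarrow> (\<forall>c\<in>F. k c = 0)"
  using assms
proof (induction F rule: finite_induct)
  case empty then show ?case by simp
next
  case (insert a F)
  show ?case
  proof (intro allI impI)
    fix k assume s: "(\<Sum>c\<in>insert a F. k c *s v c) = 0"
    then have s1: "k a *s v a + (\<Sum>c\<in>F. k c *s v c) = 0" using insert.hyps by simp
    have "M *v (k a *s v a + (\<Sum>c\<in>F. k c *s v c)) = 0" using s1 by simp
    then have s2: "(a * k a) *s v a + (\<Sum>c\<in>F. (c * k c) *s v c) = 0"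
      using insert.prems
      by (simp add: vec.add vec.sum vec.scale vector_smult_assoc mult.commute)
    have "(\<Sum>c\<in>F. (k c * (c - a)) *s v c) = (\<Sum>c\<in>F. (c * k c) *s v c) - a *s (\<Sum>c\<in>F. k c *s v c)"
      by (simp add: vec.scale_sum_right sum_subtractf[symmetric] vector_smult_assoc algebra_simps vector_sadd_rdistrib vector_ssub_ldistrib)
    also have "\<dots> = 0"
    proof -
      have e1: "(\<Sum>c\<in>F. k c *s v c) = - (k a *s v a)" using s1 by (simp add: eq_neg_iff_add_eq_0 add.commute)
      have e2: "(\<Sum>c\<in>F. (c * k c) *s v c) = - ((a * k a) *s v a)" using s2 by (simp add: eq_neg_iff_add_eq_0 add.commute)
      show ?thesis by (simp add: e1 e2 vector_smult_assoc vector_smult_rneg)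
    qed
    finally have z: "(\<Sum>c\<in>F. (k c * (c - a)) *s v c) = 0" .
    have IH: "\<forall>k. (\<Sum>c\<in>F. k c *s v c) = 0 \<longrightarrow> (\<forall>c\<in>F. k c = 0)" using insert.IH insert.prems by simp
    have "\<forall>c\<in>F. k c * (c - a) = 0" using IH[rule_format, OF z] by blast
    then have kF: "\<forall>c\<in>F. k c = 0" using insert.hyps by auto
    then have "k a *s v a = 0" using s1 by simp
    then have "k a = 0" using insert.prems by (auto simp: vec_eq_iff)
    then show "\<forall>c\<in>insert a F. k c = 0" using kF by simp
  qed
qed


lemma eig_finite: "finite (eigenvalues (M::complex^'n^'n))"
proof (rule ccontr)
  assume "infinite (eigenvalues M)"
  then obtain F where F: "finite F" "card F = Suc CARD('n)" "F \<subseteq> eigenvalues M"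
    using infinite_arbitrarily_large by blast
  define v where "v c = (SOME v. v \<noteq> 0 \<and> M *v v = c *s v)" for c
  have v: "\<forall>c\<in>F. v c \<noteq> 0 \<and> M *v v c = c *s v c"
  proof
    fix c assume "c \<in> F"
    then have "\<exists>v. v \<noteq> 0 \<and> M *v v = c *s v" using F(3) by (auto simp: eigenvalues_def)
    then show "v c \<noteq> 0 \<and> M *v v c = c *s v c" unfolding v_def by (rule someI_ex)
  qed
  have inj: "inj_on v F"
  proof (rule inj_onI)
    fix c d assume cd: "c \<in> F" "d \<in> F" "v c = v d"
    then have "c *s v c = d *s v c" using v by metis
    then have "(c - d) *s v c = 0" by (simp add: vector_ssub_ldistrib)
    then show "c = d" using v cd(1) by (auto simp: vec_eq_iff)
  qed
  have ind: "vec.independent (v ` F)"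
    unfolding vec.independent_explicit
  proof (intro conjI allI impI)
    show "finite (v ` F)" using F(1) by simp
    fix g assume "(\<Sum>w\<in>v ` F. g w *s w) = 0"
    then have "(\<Sum>c\<in>F. g (v c) *s v c) = 0" by (simp add: sum.reindex[OF inj])
    then have "\<forall>c\<in>F. g (v c) = 0" using eig_indep[OF F(1) v, rule_format, of "\<lambda>c. g (v c)"] by blast
    then show "\<forall>w\<in>v ` F. g w = 0" by blast
  qed
  have "card (v ` F) \<le> vec.dim (UNIV::(complex^'n) set)"
    by (rule vec.independent_card_le_dim[OF _ ind]) simp
  then have "card F \<le> CARD('n)" using card_image[OF inj] using vec_dim_card[where 'a=complex and 'n='n] by simp
  then show False using F(2) by simp
qed

lemma gm_pos:
  assumes "c \<in> eigenvalues (M::complex^'n^'n)" shows "geom_mult M c \<ge> 1"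
proof -
  obtain v where v: "v \<noteq> 0" "M *v v = c *s v" using assms by (auto simp: eigenvalues_def)
  have "vec.dim {v} \<le> geom_mult M c" unfolding geom_mult_def
    by (rule vec.dim_subset) (use v in auto)
  then show ?thesis using v by simp
qed

lemma gm_zero:
  assumes "c \<notin> eigenvalues (M::complex^'n^'n)" shows "geom_mult M c = 0"
proof -
  have "{v. M *v v = c *s v} = {0}" using assms by (auto simp: eigenvalues_def)
  then show ?thesis by (simp add: geom_mult_def)
qed

lemma gm_pert:
  fixes A B :: "complex^'n^'n"
  shows "geom_mult A c \<le> geom_mult (A + B) c + rank B"
proof -
  obtain I where I: "finite I" "card I \<le> rank B" "{x. \<forall>i\<in>I. (B *v x) $ i = 0} \<subseteq> {x. B *v x = 0}"
    by (rule ker_rank)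
  let ?E = "{v. A *v v = c *s v}"
  have "vec.dim ?E \<le> vec.dim (?E \<inter> {x. \<forall>i\<in>I. (B *v x) $ i = 0}) + card I"
    by (rule dim_cut_set[OF I(1) eigsp_subspace])
  also have "vec.dim (?E \<inter> {x. \<forall>i\<in>I. (B *v x) $ i = 0}) \<le> vec.dim {v. (A + B) *v v = c *s v}"
    by (rule vec.dim_subset) (use I(3) in \<open>auto simp: matrix_vector_mult_add_rdistrib\<close>)
  finally show ?thesis using I(2) unfolding geom_mult_def by simp
qed

theorem corollary4p1:
  fixes A B C :: "complex^'n^'n"
  assumes "C = A + B"
  shows "int (derog_index C) \<ge> int (derog_index A) - int (rank B) * int (card (eigenvalues A))"
proof -
  let ?T = "eigenvalues A" and ?U = "eigenvalues C"
  have fT: "finite ?T" and fU: "finite ?U" by (rule eig_finite)+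
  have "int (derog_index A) - int (rank B) * int (card ?T) = (\<Sum>c\<in>?T. int (geom_mult A c - 1) - int (rank B))"
    unfolding derog_index_def by (simp add: sum_subtractf of_nat_sum)
  also have "\<dots> \<le> (\<Sum>c\<in>?T. int (geom_mult C c - 1))"
  proof (rule sum_mono)
    fix c assume c: "c \<in> ?T"
    have "geom_mult A c \<ge> 1" using gm_pos[OF c] .
    moreover have "geom_mult A c \<le> geom_mult C c + rank B" using gm_pert[of A c B] assms by simp
    ultimately show "int (geom_mult A c - 1) - int (rank B) \<le> int (geom_mult C c - 1)" by linarith
  qed
  also have "\<dots> = (\<Sum>c\<in>?T \<inter> ?U. int (geom_mult C c - 1))"
    by (rule sum.mono_neutral_right[OF fT]) (auto simp: gm_zero)
  also have "\<dots> \<le> (\<Sum>c\<in>?U. int (geom_mult C c - 1))"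
    by (rule sum_mono2[OF fU]) auto
  also have "\<dots> = int (derog_index C)" unfolding derog_index_def by (simp add: of_nat_sum)
  finally show ?thesis .
qed

end
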